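(* Let $\Omega$ be a set of permutations. Then $$\mathcal{F}(\Omega)=\gamma\bigl(\mathrm{Modasc}[\Omega^{-1}]\bigr),\qquad\text{where } [\Omega^{-1}]=\bigcup_{\sigma\in\Omega}[\sigma^{-1}],$$ and $\mathrm{Modasc}[\Omega^{-1}]$ is the set of modified ascent sequences avoiding every Cayley permutation in $[\Omega^{-1}]$.
   Context: A Cayley permutation of length $n$ is a word of positive integers in which every integer from $1$ to its maximum occurs; $\mathrm{Cay}$ is the set of all of them. Containment $y\le x$: there are indices $i_1<\dots<i_k$ ($k$ the length of $y$) with $x(i_s)<x(i_t)\iff y(s)<y(t)$ and $x(i_s)=x(i_t)\iff y(s)=y(t)$; otherwise $x$ avoids $y$. For $x\in\mathrm{Cay}_n$, $\gamma(x)$ is the permutation obtained by sorting the pairs $(x(i),i)$ increasingly by first coordinate, ties by decreasing second coordinate, and reading the second coordinates; $\gamma(E)=\{\gamma(x):x\in E\}$. $x\sim y$ iff $\gamma(x)=\gamma(y)$, $[y]$ is the class of $y$. Modified ascent sequences: $\mathrm{Modasc}_0=\{\text{empty word}\}$, $\mathrm{Modasc}_1=\{1\}$; for $n\ge2$, $x\in\mathrm{Modasc}_n$ iff there is $v\in\mathrm{Modasc}_{n-1}$ with last letter $b$ such that either $x=va$ with $1\le a\le b$, or $x=\tilde va$ with $b<a\le2+\mathrm{asc}(v)$, where $\mathrm{asc}(v)=|\{i:v(i)<v(i+1)\}|$ and $\tilde v$ is $v$ with every entry $c\ge a$ increased by one. A permutation $\pi$ is Fishburn if there are no indices $i$ and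 $k>i+1$ with $\pi(i)<\pi(i+1)$ and $\pi(k)=\pi(i)-1$; $\mathcal{F}(\Omega)$ is the set of Fishburn permutations avoiding every pattern in $\Omega$. *)

theory Defs
  imports Main "HOL-Library.Product_Lexorder"
begin

text \<open>Words of positive integers are represented as lists of naturals; positions are
  0-indexed in the list, but values are the paper's values (positive integers).\<close>

definition cay :: "nat list \<Rightarrow> bool" where
  "cay x \<longleftrightarrow> (\<exists>m. set x = {1..m})"

definition is_perm :: "nat list \<Rightarrow> bool" where
  "is_perm p \<longleftrightarrow> distinct p \<and> set p = {1..length p}"

definition contains :: "nat list \<Rightarrow> nat list \<Rightarrow> bool" where
  "contains x y \<longleftrightarrow> (\<exists>is. length is = length y \<and> sorted_wrt (<) is \<and>
     (\<forall>i\<in>set is. i < length x) \<and>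
     (\<forall>s<length y. \<forall>t<length y.
        (x ! (is ! s) < x ! (is ! t) \<longleftrightarrow> y ! s < y ! t) \<and>
        (x ! (is ! s) = x ! (is ! t) \<longleftrightarrow> y ! s = y ! t)))"

definition gamma :: "nat list \<Rightarrow> nat list" where
  "gamma x = map snd (sort_key (\<lambda>(a, i). (a, length x - i)) (zip x [1..<Suc (length x)]))"

definition cls :: "nat list \<Rightarrow> nat list set" where
  "cls y = {x. cay x \<and> gamma x = gamma y}"

definition asc :: "nat list \<Rightarrow> nat" where
  "asc v = card {i. Suc i < length v \<and> v ! i < v ! Suc i}"

inductive_set modasc :: "nat list set" where
  empty: "[] \<in> modasc"
| one: "[1] \<in> modasc"
| append_le: "v \<in> modasc \<Longrightarrow> v \<noteq> [] \<Longrightarrow> 1 \<le> a \<Longrightarrow> a \<le> last v \<Longrightarrow> v @ [a] \<in> modasc"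
| append_gt: "v \<in> modasc \<Longrightarrow> v \<noteq> [] \<Longrightarrow> last v < a \<Longrightarrow> a \<le> 2 + asc v \<Longrightarrow>
     map (\<lambda>c. if a \<le> c then c + 1 else c) v @ [a] \<in> modasc"

definition perm_inv :: "nat list \<Rightarrow> nat list" where
  "perm_inv p = map (\<lambda>j. Suc (LEAST i. i < length p \<and> p ! i = j)) [1..<Suc (length p)]"

definition fishburn :: "nat list \<Rightarrow> bool" where
  "fishburn p \<longleftrightarrow> \<not> (\<exists>i k. Suc i < k \<and> k < length p \<and> p ! i < p ! Suc i \<and> p ! k + 1 = p ! i)"

definition fishburn_av :: "nat list set \<Rightarrow> nat list set" where
  "fishburn_av \<Omega> = {p. is_perm p \<and> fishburn p \<and> (\<forall>\<sigma>\<in>\<Omega>. \<not> contains p \<sigma>)}"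

definition inv_class :: "nat list set \<Rightarrow> nat list set" where
  "inv_class \<Omega> = (\<Union>\<sigma>\<in>\<Omega>. cls (perm_inv \<sigma>))"

definition modasc_av :: "nat list set \<Rightarrow> nat list set" where
  "modasc_av B = {x \<in> modasc. \<forall>y\<in>B. \<not> contains x y}"

end

theory Submission
  imports Defs
begin


definition KK :: "nat list \<Rightarrow> nat \<Rightarrow> nat \<times> nat" where
  "KK x i = (x!(i-1), length x - i)"

definition goodl :: "nat list \<Rightarrow> nat list \<Rightarrow> bool" where
  "goodl x l \<longleftrightarrow> distinct l \<and> set l = {1..length x} \<and> sorted_wrt (\<lambda>i j. KK x i < KK x j) l"

lemma inj_KK: "inj_on (KK x) {1..length x}"
  by (auto simp: inj_on_def KK_def)

lemma gamma_good: "goodl x (gamma x)"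
proof -
  define n where "n = length x"
  define zs where "zs = zip x [1..<Suc n]"
  define f where "f = (\<lambda>(a::nat, i::nat). (a, n - i))"
  define ys where "ys = sort_key f zs"
  have g: "gamma x = map snd ys" unfolding gamma_def ys_def zs_def f_def n_def by simp
  have setzs: "\<forall>e\<in>set zs. f e = KK x (snd e) \<and> snd e \<in> {1..n}"
    unfolding zs_def by (auto simp del: upt_Suc simp: set_zip f_def KK_def n_def)
  have ms: "map snd zs = [1..<Suc n]" unfolding zs_def n_def by simp
  have s1: "set (map snd ys) = {1..n}"
    by (metis ys_def set_sort set_map ms set_upt atLeastLessThanSuc_atLeastAtMost)
  have l1: "length (map snd ys) = n" unfolding ys_def zs_def n_def by (simp del: upt_Suc)
  have d1: "distinct (map snd ys)" using s1 l1 by (simp add: card_distinct)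
  have "map f ys = map (KK x) (map snd ys)"
    using setzs unfolding ys_def by auto
  moreover have "sorted (map f ys)" unfolding ys_def by simp
  ultimately have "sorted (map (KK x) (map snd ys))" by metis
  moreover have "distinct (map (KK x) (map snd ys))"
    using d1 s1 inj_KK[of x] by (simp only: distinct_map n_def)
  ultimately have "sorted_wrt (<) (map (KK x) (map snd ys))" by (simp add: strict_sorted_iff)
  then show ?thesis unfolding goodl_def g using d1 s1 by (simp add: sorted_wrt_map n_def)
qed

lemma good_unique: assumes "goodl x l1" "goodl x l2" shows "l1 = l2"
proof -
  have a: "sorted_wrt (<) (map (KK x) l1)" "sorted_wrt (<) (map (KK x) l2)"
    using assms by (auto simp: goodl_def sorted_wrt_map)
  have "map (KK x) l1 = map (KK x) l2"
    apply (rule sorted_distinct_set_unique)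
    using a assms by (auto simp: strict_sorted_iff goodl_def)
  moreover have "inj_on (KK x) (set l1 \<union> set l2)" using assms inj_KK[of x] by (simp add: goodl_def)
  ultimately show ?thesis by (metis map_inj_on sup_commute)
qed

lemma gamma_eqI: "goodl x l \<Longrightarrow> gamma x = l"
  using good_unique gamma_good by blast

lemma length_gamma[simp]: "length (gamma x) = length x"
  unfolding gamma_def by (simp del: upt_Suc)

lemma gamma_perm: "is_perm (gamma x)"
  using gamma_good[of x] by (simp add: goodl_def is_perm_def)

lemma gamma_sorted: "i < j \<Longrightarrow> j < length x \<Longrightarrow> KK x (gamma x ! i) < KK x (gamma x ! j)"
  using gamma_good[of x] by (auto simp: goodl_def sorted_wrt_iff_nth_less)

lemma gamma_sorted_iff: assumes "i < length x" "j < length x"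
  shows "KK x (gamma x ! i) < KK x (gamma x ! j) \<longleftrightarrow> i < j"
  using gamma_sorted[of i j x] gamma_sorted[of j i x] assms
  by (metis less_asym' linorder_neqE_nat)

lemma gamma_range: "i < length x \<Longrightarrow> gamma x ! i \<in> {1..length x}"
  using gamma_good[of x] by (auto simp: goodl_def)

lemma perm_inv_len[simp]: "length (perm_inv p) = length p"
  unfolding perm_inv_def by (simp del: upt_Suc)

lemma perm_range: "is_perm p \<Longrightarrow> i < length p \<Longrightarrow> 1 \<le> p!i \<and> p!i \<le> length p"
  unfolding is_perm_def by (metis atLeastAtMost_iff nth_mem)

lemma perm_surj: "is_perm p \<Longrightarrow> 1 \<le> v \<Longrightarrow> v \<le> length p \<Longrightarrow> \<exists>i<length p. p!i = v"
  unfolding is_perm_def by (metis atLeastAtMost_iff in_set_conv_nth)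

lemma perm_inv_nth: assumes "is_perm p" "i < length p"
  shows "perm_inv p ! (p!i - 1) = Suc i"
proof -
  have r: "1 \<le> p!i" "p!i \<le> length p" using perm_range assms by auto
  have "[1..<Suc (length p)] ! (p!i - 1) = p!i" using r by (simp del: upt_Suc)
  then have "perm_inv p ! (p!i - 1) = Suc (LEAST j. j < length p \<and> p ! j = p!i)"
    unfolding perm_inv_def using r by (simp del: upt_Suc)
  moreover have "(LEAST j. j < length p \<and> p ! j = p!i) = i"
  proof (rule Least_equality)
    show "i < length p \<and> p ! i = p ! i" using assms by simp
    fix y assume "y < length p \<and> p ! y = p ! i"
    then have "y = i" using assms nth_eq_iff_index_eq unfolding is_perm_def by blast
    then show "i \<le> y" by simp
  qed
  ultimately show ?thesis by simp
qed

lemma perm_inv_nth2: assumes "is_perm p" "q < length p"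
  shows "perm_inv p ! q - 1 < length p \<and> p ! (perm_inv p ! q - 1) = Suc q"
proof -
  obtain i where i: "i < length p" "p!i = Suc q" using perm_surj[of p "Suc q"] assms by auto
  then have "perm_inv p ! q = Suc i" using perm_inv_nth[OF assms(1) i(1)] by simp
  then show ?thesis using i by simp
qed

lemma gamma_perm_inv: assumes "is_perm s" shows "gamma (perm_inv s) = s"
proof (rule gamma_eqI)
  show "goodl (perm_inv s) s"
    unfolding goodl_def
  proof (intro conjI)
    show "distinct s" "set s = {1..length (perm_inv s)}" using assms by (auto simp: is_perm_def)
    show "sorted_wrt (\<lambda>i j. KK (perm_inv s) i < KK (perm_inv s) j) s"
      unfolding sorted_wrt_iff_nth_less
      using perm_inv_nth[OF assms] by (auto simp: KK_def)
  qed
qed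



definition occ :: "nat list \<Rightarrow> nat list \<Rightarrow> nat list \<Rightarrow> bool" where
  "occ x y is \<longleftrightarrow> length is = length y \<and> sorted_wrt (<) is \<and>
     (\<forall>i\<in>set is. i < length x) \<and>
     (\<forall>s<length y. \<forall>t<length y.
        (x ! (is ! s) < x ! (is ! t) \<longleftrightarrow> y ! s < y ! t) \<and>
        (x ! (is ! s) = x ! (is ! t) \<longleftrightarrow> y ! s = y ! t))"

lemma contains_occ: "contains x y \<longleftrightarrow> (\<exists>is. occ x y is)"
  unfolding contains_def occ_def by blast

lemma occ_idx: assumes "occ x y is" "a < length y" "b < length y"
  shows "(is!a < is!b \<longleftrightarrow> a < b) \<and> (is!a = is!b \<longleftrightarrow> a = b) \<and> is!a < length x"
proof -
  have "sorted_wrt (<) is" "length is = length y" "\<forall>i\<in>set is. i < length x"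
    using assms(1) by (auto simp: occ_def)
  then have sm: "is!i < is!j" if "i < j" "j < length y" for i j
    using that unfolding sorted_wrt_iff_nth_less by auto
  have A: "is!a < is!b \<longleftrightarrow> a < b" using sm[of a b] sm[of b a] assms by (metis less_asym' nat_neq_iff)
  have B: "is!a = is!b \<longleftrightarrow> a = b" using sm[of a b] sm[of b a] assms by (metis less_irrefl nat_neq_iff)
  have C: "is!a < length x" using \<open>length is = length y\<close> \<open>\<forall>i\<in>set is. i < length x\<close> assms(2) nth_mem by metis
  show ?thesis using A B C by blast
qed

lemma occ_transfer: assumes "occ x y is" "a < length y" "b < length y"
  shows "KK x (is!a + 1) < KK x (is!b + 1) \<longleftrightarrow> KK y (a+1) < KK y (b+1)"
proof -
  have i: "(is!a < is!b \<longleftrightarrow> a < b)" "is!a < length x" "is!b < length x"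
    using occ_idx[OF assms] occ_idx[OF assms(1,3,2)] by auto
  have c: "(x ! (is ! a) < x ! (is ! b) \<longleftrightarrow> y ! a < y ! b)"
          "(x ! (is ! a) = x ! (is ! b) \<longleftrightarrow> y ! a = y ! b)"
    using assms by (auto simp: occ_def)
  have "length x - Suc (is!a) < length x - Suc (is!b) \<longleftrightarrow> is!b < is!a" using i by auto
  moreover have "length y - Suc a < length y - Suc b \<longleftrightarrow> b < a" using assms by auto
  moreover have "(is!b < is!a \<longleftrightarrow> b < a)" using occ_idx[OF assms(1,3,2)] by auto
  ultimately show ?thesis using c by (auto simp: KK_def)
qed

lemma pat1: assumes "is_perm s" "gamma y = s" "occ x y is"
  shows "contains (gamma x) s"
proof -
  define k where "k = length y"
  define g where "g = gamma x"
  have ks: "length s = k" using assms(2) k_def by auto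
  have gp: "is_perm g" unfolding g_def by (rule gamma_perm)
  have sr: "\<And>t. t < k \<Longrightarrow> 1 \<le> s!t \<and> s!t \<le> k" using perm_range[OF assms(1)] ks by auto
  define js where "js = map (\<lambda>t. perm_inv g ! (is!(s!t - 1)) - 1) [0..<k]"
  have J: "js!t < length g \<and> g!(js!t) = Suc (is!(s!t - 1))" if "t < k" for t
  proof -
    have "s!t - 1 < k" using sr[OF that] by auto
    then have "is!(s!t - 1) < length g" using occ_idx[OF assms(3)] k_def g_def by auto
    then show ?thesis using perm_inv_nth2[OF gp] that js_def by auto
  qed
  have lj: "length js = length s" using ks js_def by simp
  have cmp: "(g!(js!t) < g!(js!u) \<longleftrightarrow> s!t < s!u) \<and> (g!(js!t) = g!(js!u) \<longleftrightarrow> s!t = s!u)"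
    if "t < k" "u < k" for t u
  proof -
    have "s!t - 1 < k" "s!u - 1 < k" using sr that by force+
    then have "(is!(s!t - 1) < is!(s!u - 1) \<longleftrightarrow> s!t - 1 < s!u - 1) \<and> (is!(s!t - 1) = is!(s!u - 1) \<longleftrightarrow> s!t - 1 = s!u - 1)"
      using occ_idx[OF assms(3)] k_def by auto
    then show ?thesis using J that sr[OF that(1)] sr[OF that(2)] by auto
  qed
  have sj: "js!t < js!u" if "t < u" "u < k" for t u
  proof -
    have tk: "t < k" using that by simp
    have a: "s!t - 1 < k" "s!u - 1 < k" using sr tk that(2) by force+
    have "KK y (s!t) < KK y (s!u)"
      using gamma_sorted[of t u y] that assms(2) ks k_def by simp
    moreover have "s!t - 1 + 1 = s!t" "s!u - 1 + 1 = s!u" using sr tk that(2) by force+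
    ultimately have "KK y (s!t - 1 + 1) < KK y (s!u - 1 + 1)" by simp
    then have "KK x (is!(s!t - 1) + 1) < KK x (is!(s!u - 1) + 1)"
      using occ_transfer[OF assms(3)] a k_def by blast
    then have "KK x (gamma x ! (js!t)) < KK x (gamma x ! (js!u))"
      using J[OF tk] J[OF that(2)] g_def by simp
    then show ?thesis using gamma_sorted_iff[where i="js!t" and j="js!u" and x=x] J[OF tk] J[OF that(2)] g_def by simp
  qed
  have "occ g s js"
    unfolding occ_def
  proof (intro conjI)
    show "length js = length s" by (rule lj)
    show "sorted_wrt (<) js" unfolding sorted_wrt_iff_nth_less using sj lj ks by auto
    show "\<forall>i\<in>set js. i < length g" using J lj ks by (auto simp: in_set_conv_nth)
    show "\<forall>sa<length s. \<forall>t<length s. (g ! (js ! sa) < g ! (js ! t)) = (s ! sa < s ! t) \<and>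
        (g ! (js ! sa) = g ! (js ! t)) = (s ! sa = s ! t)" using cmp ks by auto
  qed
  then show ?thesis unfolding g_def contains_occ by blast
qed

definition rank :: "nat set \<Rightarrow> nat \<Rightarrow> nat" where
  "rank V v = card {w\<in>V. w \<le> v}"

lemma rank_mono: assumes "finite V" "v \<in> V" "w \<in> V" "v < w" shows "rank V v < rank V w"
proof -
  have "w \<notin> {u\<in>V. u \<le> v}" "w \<in> {u\<in>V. u \<le> w}" using assms by auto
  moreover have "{u\<in>V. u \<le> v} \<subseteq> {u\<in>V. u \<le> w}" using assms by auto
  ultimately have "{u\<in>V. u \<le> v} \<subset> {u\<in>V. u \<le> w}" by blast
  moreover have "finite {u\<in>V. u \<le> w}" using assms by simp
  ultimately show ?thesis unfolding rank_def by (simp add: psubset_card_mono)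
qed

lemma rank_iff: assumes "finite V" "v \<in> V" "w \<in> V"
  shows "(rank V v < rank V w \<longleftrightarrow> v < w) \<and> (rank V v = rank V w \<longleftrightarrow> v = w)"
  using rank_mono[OF assms(1)] assms by (metis less_asym' linorder_neqE_nat)

lemma rank_image: assumes "finite V" shows "rank V ` V = {1..card V}"
proof -
  have sub: "rank V ` V \<subseteq> {1..card V}"
  proof
    fix r assume "r \<in> rank V ` V"
    then obtain v where v: "v \<in> V" "r = rank V v" by auto
    have "card {w\<in>V. w \<le> v} \<ge> 1" using v assms by (metis (mono_tags, lifting) One_nat_def Suc_leI card_gt_0_iff empty_iff finite_subset mem_Collect_eq order_refl subsetI)
    moreover have "card {w\<in>V. w \<le> v} \<le> card V" using assms by (intro card_mono) auto
    ultimately show "r \<in> {1..card V}" using v unfolding rank_def by auto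
  qed
  have "inj_on (rank V) V" using rank_iff[OF assms] by (meson inj_onI)
  then have "card (rank V ` V) = card {1..card V}" by (simp add: card_image)
  then show ?thesis using sub by (intro card_subset_eq) auto
qed

lemma pat2: assumes "is_perm s" "contains (gamma x) s"
  shows "\<exists>y. cay y \<and> gamma y = s \<and> contains x y"
proof -
  define g where "g = gamma x"
  define n where "n = length x"
  define k where "k = length s"
  obtain js where js: "occ g s js" using assms(2) contains_occ g_def by blast
  define t where "t = perm_inv s"
  define q where "q = (\<lambda>i. g!(js!i) - 1)"
  have Q: "q i < n \<and> Suc (q i) = g!(js!i)" if "i < k" for i
    using occ_idx[OF js, of i i] that gamma_range[of "js!i" x] g_def n_def q_def k_def by auto
  have qc: "(q i < q j \<longleftrightarrow> s!i < s!j)" if "i < k" "j < k" for i j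
  proof -
    have "(g!(js!i) < g!(js!j) \<longleftrightarrow> s!i < s!j)" using js that k_def by (auto simp: occ_def)
    then show ?thesis using Q that by (metis Suc_less_eq)
  qed
  have T: "t!i - 1 < k \<and> s!(t!i - 1) = Suc i" if "i < k" for i
    using perm_inv_nth2[OF assms(1)] that t_def k_def by auto
  define ix where "ix = map (\<lambda>i. q (t!i - 1)) [0..<k]"
  have lis: "length ix = k" using ix_def by simp
  have isn: "ix!i < n" if "i < k" for i using Q T that ix_def by auto
  have iss: "sorted_wrt (<) ix"
    unfolding sorted_wrt_iff_nth_less lis
  proof (intro allI impI)
    fix i j assume "i < j" "j < k"
    then show "ix!i < ix!j" using qc T[of i] T[of j] ix_def by auto
  qed
  define V where "V = (\<lambda>i. x!(ix!i)) ` {0..<k}"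
  have fV: "finite V" using V_def by simp
  define y where "y = map (\<lambda>i. rank V (x!(ix!i))) [0..<k]"
  have ly: "length y = k" using y_def by simp
  have oc: "occ x y ix"
    unfolding occ_def
  proof (intro conjI)
    show "length ix = length y" using lis ly by simp
    show "sorted_wrt (<) ix" by (rule iss)
    show "\<forall>i\<in>set ix. i < length x" using isn lis n_def by (auto simp: in_set_conv_nth)
    show "\<forall>sa<length y. \<forall>t<length y. (x ! (ix ! sa) < x ! (ix ! t)) = (y ! sa < y ! t) \<and>
        (x ! (ix ! sa) = x ! (ix ! t)) = (y ! sa = y ! t)"
      using rank_iff[OF fV] ly y_def V_def by auto
  qed
  have cy: "cay y"
  proof -
    have "set y = rank V ` V" unfolding y_def V_def by auto
    then show ?thesis using rank_image[OF fV] cay_def by auto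
  qed
  have "gamma y = s"
  proof (rule gamma_eqI)
    show "goodl y s" unfolding goodl_def
    proof (intro conjI)
      show "distinct s" "set s = {1..length y}" using assms(1) ly k_def by (auto simp: is_perm_def)
      show "sorted_wrt (\<lambda>i j. KK y i < KK y j) s"
        unfolding sorted_wrt_iff_nth_less
      proof (intro allI impI)
        fix i j assume ij: "i < j" "j < length s"
        then have ik: "i < k" "j < k" using k_def by auto
        have r: "1 \<le> s!i" "s!i \<le> k" "1 \<le> s!j" "s!j \<le> k" using perm_range[OF assms(1)] ik k_def by auto
        have ti: "t!(s!i - 1) = Suc i" "t!(s!j - 1) = Suc j"
          using perm_inv_nth[OF assms(1)] ik k_def t_def by auto
        have ei: "ix!(s!i - 1) = q i" "ix!(s!j - 1) = q j"
          using ti r ix_def by auto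
        have "KK x (g!(js!i)) < KK x (g!(js!j))"
          using gamma_sorted[of "js!i" "js!j" x] occ_idx[OF js] ij ik g_def k_def by auto
        then have "KK x (ix!(s!i - 1) + 1) < KK x (ix!(s!j - 1) + 1)" using ei Q ik by simp
        then have "KK y (s!i - 1 + 1) < KK y (s!j - 1 + 1)"
          using occ_transfer[OF oc] r ly by auto
        then show "KK y (s!i) < KK y (s!j)" using r by simp
      qed
    qed
  qed
  then show ?thesis using cy oc contains_occ by blast
qed

lemma pattern: "is_perm s \<Longrightarrow> contains (gamma x) s \<longleftrightarrow> (\<exists>y. cay y \<and> gamma y = s \<and> contains x y)"
  using pat1 pat2 contains_occ by blast



definition Qc :: "nat list \<Rightarrow> bool" where
  "Qc x \<longleftrightarrow> (\<forall>i. 0 < i \<and> i < length x \<longrightarrow> (x!(i-1) < x!i \<longleftrightarrow> x!i \<notin> set (take i x)))"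

lemma asc_snoc: assumes "v \<noteq> []"
  shows "asc (v@[a]) = asc v + (if last v < a then 1 else 0)"
proof -
  define S where "S = {i. Suc i < length v \<and> v ! i < v ! Suc i}"
  have fS: "finite S" unfolding S_def by (rule finite_subset[of _ "{..<length v}"]) auto
  have nS: "length v - 1 \<notin> S" unfolding S_def by auto
  have lv: "last v = v ! (length v - 1)" using assms by (simp add: last_conv_nth)
  have "{i. Suc i < length (v@[a]) \<and> (v@[a]) ! i < (v@[a]) ! Suc i}
        = S \<union> (if last v < a then {length v - 1} else {})"
  proof (rule set_eqI)
    fix i
    show "i \<in> {i. Suc i < length (v@[a]) \<and> (v@[a]) ! i < (v@[a]) ! Suc i} \<longleftrightarrow>
          i \<in> S \<union> (if last v < a then {length v - 1} else {})"
    proof (cases "Suc i < length v")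
      case True then show ?thesis unfolding S_def by (auto simp: nth_append)
    next
      case False
      have lp: "length v > 0" using assms by simp
      show ?thesis
      proof (cases "Suc i = length v")
        case True
        then have "i = length v - 1" by simp
        then show ?thesis unfolding S_def using lv lp by (auto simp: nth_append)
      next
        case False
        then show ?thesis unfolding S_def using lv lp \<open>\<not> Suc i < length v\<close> by auto
      qed
    qed
  qed
  then show ?thesis unfolding asc_def S_def[symmetric] using fS nS by auto
qed

lemma asc_map: assumes "\<forall>b\<in>set v. \<forall>c\<in>set v. (f b < f c \<longleftrightarrow> b < c)"
  shows "asc (map f v) = asc v"
proof -
  have "{i. Suc i < length (map f v) \<and> (map f v) ! i < (map f v) ! Suc i}
      = {i. Suc i < length v \<and> v ! i < v ! Suc i}"
    using assms by auto
  then show ?thesis unfolding asc_def by simp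
qed

lemma Qc_map: assumes "\<forall>b\<in>set v. \<forall>c\<in>set v. (h b < h c \<longleftrightarrow> b < c) \<and> (h b = h c \<longleftrightarrow> b = c)"
  shows "Qc (map h v) \<longleftrightarrow> Qc v"
proof -
  have "((map h v)!(i-1) < (map h v)!i \<longleftrightarrow> (map h v)!i \<notin> set (take i (map h v))) \<longleftrightarrow>
        (v!(i-1) < v!i \<longleftrightarrow> v!i \<notin> set (take i v))" if "0 < i" "i < length v" for i
  proof -
    have m: "v!(i-1) \<in> set v" "v!i \<in> set v" using that by auto
    have "h (v!i) \<in> h ` set (take i v) \<longleftrightarrow> v!i \<in> set (take i v)"
    proof -
      have sub: "set (take i v) \<subseteq> set v" by (rule set_take_subset)
      show ?thesis
      proof
        assume "h (v!i) \<in> h ` set (take i v)"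
        then obtain z where z: "z \<in> set (take i v)" "h z = h (v!i)" by auto
        then have "z \<in> set v" using sub by auto
        then have "z = v!i" using z(2) assms m(2) by simp
        then show "v!i \<in> set (take i v)" using z(1) by simp
      qed auto
    qed
    then show ?thesis using m assms that by (simp add: take_map)
  qed
  note eq = this
  show ?thesis
  proof
    assume A: "Qc (map h v)"
    show "Qc v" unfolding Qc_def
    proof (intro allI impI)
      fix i assume i: "0 < i \<and> i < length v"
      then have "(map h v ! (i - 1) < map h v ! i) = (map h v ! i \<notin> set (take i (map h v)))"
        using A unfolding Qc_def by simp
      then show "(v ! (i - 1) < v ! i) = (v ! i \<notin> set (take i v))" using eq[of i] i by blast
    qed
  next
    assume A: "Qc v"
    show "Qc (map h v)" unfolding Qc_def
    proof (intro allI impI)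
      fix i assume i: "0 < i \<and> i < length (map h v)"
      then have "(v ! (i - 1) < v ! i) = (v ! i \<notin> set (take i v))"
        using A unfolding Qc_def by simp
      then show "(map h v ! (i - 1) < map h v ! i) = (map h v ! i \<notin> set (take i (map h v)))"
        using eq[of i] i by (metis length_map)
    qed
  qed
qed

lemma modasc_inv: "x \<in> modasc \<Longrightarrow> (x \<noteq> [] \<longrightarrow> set x = {1..asc x + 1}) \<and> Qc x"
proof (induction rule: modasc.induct)
  case empty
  then show ?case by (simp add: Qc_def)
next
  case one
  then show ?case by (auto simp: Qc_def asc_def)
next
  case (append_le v a)
  have lv: "last v \<in> set v" using append_le.hyps by simp
  have aset: "a \<in> set v" using append_le lv by auto
  have as: "asc (v@[a]) = asc v" using asc_snoc[OF append_le.hyps(2)] append_le.hyps by simp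
  have s: "set (v@[a]) = set v" using aset by auto
  have "Qc (v@[a])" unfolding Qc_def
  proof (intro allI impI)
    fix i assume i: "0 < i \<and> i < length (v@[a])"
    show "((v@[a])!(i-1) < (v@[a])!i \<longleftrightarrow> (v@[a])!i \<notin> set (take i (v@[a])))"
    proof (cases "i < length v")
      case True
      then show ?thesis using append_le.IH i unfolding Qc_def by (auto simp: nth_append)
    next
      case False
      then have "i = length v" using i by simp
      moreover have "v ! (length v - 1) = last v" using append_le.hyps by (simp add: last_conv_nth)
      ultimately show ?thesis using aset append_le.hyps by (auto simp: nth_append)
    qed
  qed
  then show ?case using as s append_le by auto
next
  case (append_gt v a)
  define f where "f = (\<lambda>c::nat. if a \<le> c then c + 1 else c)"
  have fm: "\<forall>b\<in>set v. \<forall>c\<in>set v. (f b < f c \<longleftrightarrow> b < c) \<and> (f b = f c \<longleftrightarrow> b = c)"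
    unfolding f_def by auto
  have lf: "last (map f v) = last v" using append_gt.hyps unfolding f_def by (simp add: last_map)
  have as: "asc (map f v @ [a]) = asc v + 1"
    using asc_snoc[of "map f v" a] append_gt.hyps lf asc_map[of v f] fm by simp
  define m where "m = asc v + 1"
  have sv: "set v = {1..m}" using append_gt m_def by simp
  have a1: "2 \<le> a" "a \<le> m + 1"
  proof -
    have "last v \<in> set v" using append_gt.hyps by simp
    then show "2 \<le> a" using sv append_gt.hyps by auto
    show "a \<le> m + 1" using append_gt.hyps m_def by simp
  qed
  have "set (map f v @ [a]) = {1..m+1}"
  proof -
    have "f ` {1..m} \<union> {a} = {1..m+1}"
    proof
      show "f ` {1..m} \<union> {a} \<subseteq> {1..m+1}" using a1 unfolding f_def by auto
      show "{1..m+1} \<subseteq> f ` {1..m} \<union> {a}"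
      proof
        fix d assume d: "d \<in> {1..m+1}"
        show "d \<in> f ` {1..m} \<union> {a}"
        proof (cases "d < a")
          case True
          then have "f d = d" "d \<in> {1..m}" using d a1 unfolding f_def by auto
          then show ?thesis by (metis UnI1 image_eqI)
        next
          case False
          show ?thesis
          proof (cases "d = a")
            case True then show ?thesis by simp
          next
            case False
            then have "f (d - 1) = d" "d - 1 \<in> {1..m}" using d a1 \<open>\<not> d < a\<close> unfolding f_def by auto
            then show ?thesis by (metis UnI1 image_eqI)
          qed
        qed
      qed
    qed
    then show ?thesis using sv by simp
  qed
  note S = this
  have "Qc (map f v @ [a])" unfolding Qc_def
  proof (intro allI impI)
    fix i assume i: "0 < i \<and> i < length (map f v @ [a])"
    show "((map f v @ [a])!(i-1) < (map f v @ [a])!i \<longleftrightarrow> (map f v @ [a])!i \<notin> set (take i (map f v @ [a])))"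
    proof (cases "i < length v")
      case True
      have "Qc (map f v)" using Qc_map[OF fm] append_gt.IH by simp
      then show ?thesis using True i unfolding Qc_def by (auto simp: nth_append)
    next
      case False
      then have il: "i = length v" using i by simp
      have "(map f v) ! (length v - 1) = last v" using lf append_gt.hyps by (simp add: last_conv_nth)
      moreover have "a \<notin> set (map f v)" unfolding f_def by auto
      ultimately show ?thesis using il append_gt.hyps by (auto simp: nth_append)
    qed
  qed
  note Q = this
  have S2: "set (map f v @ [a]) = {1..asc (map f v @ [a]) + 1}" using S as m_def by simp
  show ?case unfolding f_def[symmetric] using S2 Q by blast
qed

lemma Q_modasc: "cay x \<Longrightarrow> Qc x \<Longrightarrow> x \<in> modasc"
proof (induction x rule: length_induct)
  case (1 x)
  show ?case
  proof (cases x rule: rev_exhaust)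
    case Nil then show ?thesis by (simp add: modasc.empty)
  next
    case (snoc v a)
    obtain M where M: "set x = {1..M}" using "1.prems" cay_def by auto
    show ?thesis
    proof (cases "v = []")
      case True
      then have "{a} = {1..M}" using M snoc by simp
      then have "a = 1"
      proof -
        assume e: "{a} = {1..M}"
        then have "a \<in> {1..M}" by blast
        then have "1 \<in> {1..M}" by auto
        then show "a = 1" using e by auto
      qed
      then show ?thesis using snoc True modasc.one by simp
    next
      case vne: False
      have lv: "v ! (length v - 1) = last v" using vne by (simp add: last_conv_nth)
      have Qx: "x!(i-1) < x!i \<longleftrightarrow> x!i \<notin> set (take i x)" if "0 < i" "i < length x" for i
        using "1.prems"(2) that unfolding Qc_def by blast
      have key: "last v < a \<longleftrightarrow> a \<notin> set v"
      proof -
        have "length v > 0" using vne by simp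
        then have e: "x!(length v - 1) = last v" "x!(length v) = a" "take (length v) x = v"
          using lv snoc by (auto simp: nth_append)
        show ?thesis using Qx[of "length v"] e snoc vne by simp
      qed
      have Qv: "Qc v" unfolding Qc_def
      proof (intro allI impI)
        fix i assume i: "0 < i \<and> i < length v"
        then have e: "x!(i-1) = v!(i-1)" "x!i = v!i" "take i x = take i v"
          using snoc by (auto simp: nth_append)
        show "(v ! (i - 1) < v ! i) = (v ! i \<notin> set (take i v))"
          using Qx[of i] e i snoc by simp
      qed
      have aM: "1 \<le> a" "a \<le> M" using M snoc by auto
      show ?thesis
      proof (cases "last v < a")
        case False
        then have "a \<in> set v" using key by simp
        then have "set v = {1..M}" using M snoc by auto
        then have "cay v" unfolding cay_def by blast
        then have "v \<in> modasc" using "1.IH" snoc Qv by simp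
        then show ?thesis using snoc modasc.append_le[of v a] vne aM False by simp
      next
        case True
        then have an: "a \<notin> set v" using key by simp
        have sv: "set v = {1..M} - {a}" using M snoc an by auto
        define g where "g = (\<lambda>c::nat. if a < c then c - 1 else c)"
        define f where "f = (\<lambda>c::nat. if a \<le> c then c + 1 else c)"
        have gm: "\<forall>b\<in>set v. \<forall>c\<in>set v. (g b < g c \<longleftrightarrow> b < c) \<and> (g b = g c \<longleftrightarrow> b = c)"
        proof (intro ballI)
          fix b c assume "b \<in> set v" "c \<in> set v"
          then have "b \<noteq> a" "c \<noteq> a" using an by auto
          then show "(g b < g c \<longleftrightarrow> b < c) \<and> (g b = g c \<longleftrightarrow> b = c)" unfolding g_def by auto
        qed
        have sg: "set (map g v) = {1..M-1}"
        proof -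
          have "g ` ({1..M} - {a}) = {1..M-1}"
          proof
            show "g ` ({1..M} - {a}) \<subseteq> {1..M-1}" using aM unfolding g_def by auto
            show "{1..M-1} \<subseteq> g ` ({1..M} - {a})"
            proof
              fix d assume d: "d \<in> {1..M-1}"
              show "d \<in> g ` ({1..M} - {a})"
              proof (cases "d < a")
                case True
                then have "g d = d" "d \<in> {1..M} - {a}" using d unfolding g_def by auto
                then show ?thesis by (metis image_eqI)
              next
                case False
                then have "g (d+1) = d" "d+1 \<in> {1..M} - {a}" using d unfolding g_def by auto
                then show ?thesis by (metis image_eqI)
              qed
            qed
          qed
          then show ?thesis using sv by simp
        qed
        have cv: "cay (map g v)" using sg cay_def by blast
        have Qv': "Qc (map g v)" using Qc_map[OF gm] Qv by simp
        have vm: "map g v \<in> modasc" using "1.IH" snoc cv Qv' by simp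
        have mne: "map g v \<noteq> []" using vne by simp
        then have "set (map g v) = {1..asc (map g v) + 1}" using modasc_inv[OF vm] by simp
        then have "{1..M-1} = {1..asc (map g v) + 1}" using sg by simp
        then have "M - 1 = asc (map g v) + 1"
        proof -
          assume e: "{1..M-1} = {1..asc (map g v) + 1}"
          have "asc (map g v) + 1 \<in> {1..asc (map g v) + 1}" by simp
          then have "asc (map g v) + 1 \<in> {1..M-1}" using e by blast
          then have "M - 1 \<in> {1..M-1}" by auto
          then have "M - 1 \<in> {1..asc (map g v) + 1}" using e by blast
          then show ?thesis using \<open>asc (map g v) + 1 \<in> {1..M-1}\<close> by auto
        qed
        then have a2: "a \<le> 2 + asc (map g v)" using aM by simp
        have lg: "last (map g v) = last v" using vne True unfolding g_def by (simp add: last_map)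
        have "map (\<lambda>c. if a \<le> c then c + 1 else c) (map g v) @ [a] \<in> modasc"
          using modasc.append_gt[OF vm mne _ a2] lg True by simp
        moreover have "map (\<lambda>c. if a \<le> c then c + 1 else c) (map g v) = v"
        proof -
          have "\<forall>c\<in>set v. (\<lambda>c. if a \<le> c then c + 1 else c) (g c) = c"
            using an unfolding g_def by auto
          then show ?thesis by (simp add: map_idI)
        qed
        ultimately show ?thesis using snoc by simp
      qed
    qed
  qed
qed

lemma modasc_char: "x \<in> modasc \<longleftrightarrow> cay x \<and> Qc x"
proof
  assume x: "x \<in> modasc"
  then have "Qc x" using modasc_inv by blast
  moreover have "cay x"
  proof (cases "x = []")
    case True then show ?thesis unfolding cay_def by (intro exI[of _ 0]) simp
  next
    case False then show ?thesis using modasc_inv[OF x] cay_def by blast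
  qed
  ultimately show "cay x \<and> Qc x" by simp
next
  assume "cay x \<and> Qc x" then show "x \<in> modasc" using Q_modasc by blast
qed



lemma fish: assumes "Qc x" shows "fishburn (gamma x)"
  unfolding fishburn_def
proof
  assume "\<exists>i k. Suc i < k \<and> k < length (gamma x) \<and> gamma x ! i < gamma x ! Suc i \<and> gamma x ! k + 1 = gamma x ! i"
  then obtain i k where ik: "Suc i < k" "k < length x" "gamma x ! i < gamma x ! Suc i" "gamma x ! k + 1 = gamma x ! i"
    by auto
  define n where "n = length x"
  define p where "p = gamma x ! i"
  define q where "q = gamma x ! Suc i"
  define r where "r = gamma x ! k"
  have rg: "p \<in> {1..n}" "q \<in> {1..n}" "r \<in> {1..n}"
    using gamma_range[of i x] gamma_range[of "Suc i" x] gamma_range[of k x] ik n_def p_def q_def r_def by auto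
  have pr: "p = r + 1" "p < q" using ik p_def q_def r_def by auto
  have k1: "KK x p < KK x q" using gamma_sorted[of i "Suc i" x] ik p_def q_def by auto
  have k2: "KK x q < KK x r" using gamma_sorted[of "Suc i" k x] ik q_def r_def by auto
  have k3: "KK x p < KK x r" using k1 k2 by simp
  have xpq: "x!(p-1) < x!(q-1)" using k1 pr rg unfolding KK_def n_def by auto
  have nasc: "\<not> x!(p-1-1) < x!(p-1)"
  proof
    assume "x!(p-1-1) < x!(p-1)"
    moreover have "r - 1 = p - 1 - 1" using pr by simp
    ultimately have "KK x r < KK x p" unfolding KK_def by simp
    then show False using k3 by simp
  qed
  have "0 < p - 1" "p - 1 < length x" using pr rg n_def by auto
  then have "x!(p-1-1) < x!(p-1) \<longleftrightarrow> x!(p-1) \<notin> set (take (p-1) x)"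
    using assms unfolding Qc_def by blast
  then have "x!(p-1) \<in> set (take (p-1) x)" using nasc by blast
  then obtain j0 where j0: "j0 < p - 1" "x!j0 = x!(p-1)"
    by (auto simp: in_set_conv_nth)
  define j where "j = Suc j0"
  have jr: "j \<in> {1..n}" using j0 rg j_def by auto
  have "KK x p < KK x j" using j0 j_def rg unfolding KK_def n_def by auto
  moreover have "KK x j < KK x q" using j0 j_def xpq unfolding KK_def by auto
  moreover obtain m where m: "m < n" "gamma x ! m = j"
    using jr gamma_good[of x] unfolding goodl_def n_def by (metis in_set_conv_nth length_gamma)
  ultimately have "KK x (gamma x ! i) < KK x (gamma x ! m)" "KK x (gamma x ! m) < KK x (gamma x ! Suc i)"
    using p_def q_def by auto
  then have "i < m" "m < Suc i" using gamma_sorted_iff m ik n_def by auto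
  then show False by simp
qed

primrec blk :: "(nat \<Rightarrow> bool) \<Rightarrow> nat \<Rightarrow> nat" where
  "blk C 0 = 1"
| "blk C (Suc j) = blk C j + (if C j then 1 else 0)"

lemma blk_mono: "a \<le> b \<Longrightarrow> blk C a \<le> blk C b"
  by (induction b) (auto simp: le_Suc_eq)

lemma blk_ge1: "1 \<le> blk C a"
  using blk_mono[of 0 a C] by simp

lemma blk_strict: assumes "a \<le> c" "c < b" "C c" shows "blk C a < blk C b"
proof -
  have "blk C a \<le> blk C c" using assms blk_mono by blast
  also have "\<dots> < blk C (Suc c)" using assms by simp
  also have "\<dots> \<le> blk C b" using assms blk_mono[of "Suc c" b C] by simp
  finally show ?thesis .
qed

lemma blk_eq_noC: "a \<le> b \<Longrightarrow> blk C a = blk C b \<Longrightarrow> a \<le> c \<Longrightarrow> c < b \<Longrightarrow> \<not> C c"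
  using blk_strict by fastforce

lemma blk_ivt: "1 \<le> v \<Longrightarrow> v \<le> blk C N \<Longrightarrow> \<exists>j\<le>N. blk C j = v"
proof (induction N)
  case 0 then show ?case by simp
next
  case (Suc N)
  show ?case
  proof (cases "v \<le> blk C N")
    case True then show ?thesis using Suc by (meson le_Suc_eq)
  next
    case False
    then have "v = blk C (Suc N)" using Suc.prems by (auto split: if_splits)
    then show ?thesis by blast
  qed
qed

lemma perm_decr: assumes "is_perm p" "\<forall>c. a \<le> c \<and> c < b \<longrightarrow> \<not> p!c < p!Suc c" "a < b" "b < length p"
  shows "p!b < p!a"
  using assms(2-4)
proof (induction b)
  case 0 then show ?case by simp
next
  case (Suc b)
  have ne: "p!b \<noteq> p!Suc b" using assms(1) Suc.prems unfolding is_perm_def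
    by (metis Suc_lessD n_not_Suc_n nth_eq_iff_index_eq)
  have "\<not> p!b < p!Suc b" using Suc.prems by auto
  then have lt: "p!Suc b < p!b" using ne by simp
  show ?case
  proof (cases "a < b")
    case True then have "p!b < p!a" using Suc by auto
    then show ?thesis using lt by simp
  next
    case False then have "a = b" using Suc.prems by simp
    then show ?thesis using lt by simp
  qed
qed

lemma construct: assumes P: "is_perm p" and FB: "fishburn p"
  shows "\<exists>x. cay x \<and> Qc x \<and> gamma x = p"
proof -
  define n where "n = length p"
  define C where "C = (\<lambda>j. Suc j < n \<and> (p!j = 1 \<or> (\<exists>k<j. p!k + 1 = p!j)))"
  have dist: "\<And>a b. a < n \<Longrightarrow> b < n \<Longrightarrow> p!a = p!b \<longleftrightarrow> a = b"
    using P unfolding is_perm_def n_def by (simp add: nth_eq_iff_index_eq)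
  have F1: "C j" if "Suc j < n" "p!j < p!Suc j" for j
  proof (cases "p!j = 1")
    case True then show ?thesis using that C_def by simp
  next
    case False
    have "1 \<le> p!j" "p!j \<le> n" using perm_range[OF P] that n_def by auto
    moreover have "1 \<le> p!j - 1" using False \<open>1 \<le> p!j\<close> by simp
    ultimately have "\<exists>k<n. p!k = p!j - 1" using perm_surj[OF P, of "p!j - 1"] n_def by simp
    then obtain k where k: "k < n" "p!k = p!j - 1" by blast
    have "k \<noteq> j" using k False \<open>1 \<le> p!j\<close> by auto
    moreover have "k \<noteq> Suc j" using k that by auto
    moreover have "\<not> Suc j < k"
      using FB k that False \<open>1 \<le> p!j\<close> unfolding fishburn_def n_def by force
    ultimately have "k < j" by auto
    then show ?thesis using C_def that k False \<open>1 \<le> p!j\<close> by auto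
  qed
  have D: "p!b < p!a" if "a < b" "b < n" "blk C a = blk C b" for a b
  proof -
    have "\<forall>c. a \<le> c \<and> c < b \<longrightarrow> \<not> p!c < p!Suc c"
    proof (intro allI impI)
      fix c assume c: "a \<le> c \<and> c < b"
      then have "\<not> C c" using blk_eq_noC[of a b C c] that by auto
      moreover have "Suc c < n" using c that by simp
      ultimately show "\<not> p!c < p!Suc c" using F1 by blast
    qed
    then show ?thesis using perm_decr[OF P] that n_def by auto
  qed
  define x where "x = map (\<lambda>i. blk C (i - 1)) (perm_inv p)"
  have lx: "length x = n" using x_def n_def by simp
  have xj: "x!(p!j - 1) = blk C j" if "j < n" for j
  proof -
    have "p!j - 1 < n" using perm_range[OF P] that n_def by force
    then show ?thesis using perm_inv_nth[OF P] that x_def n_def by auto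
  qed
  have xi: "\<exists>j<n. p!j = Suc i \<and> x!i = blk C j" if hi: "i < n" for i
  proof -
    obtain j where "j < n" "p!j = Suc i" using perm_surj[OF P, of "Suc i"] hi n_def by auto
    then show ?thesis using xj by force
  qed
  have g: "gamma x = p"
  proof (rule gamma_eqI)
    show "goodl x p" unfolding goodl_def
    proof (intro conjI)
      show "distinct p" "set p = {1..length x}" using P lx n_def by (auto simp: is_perm_def)
      show "sorted_wrt (\<lambda>i j. KK x i < KK x j) p" unfolding sorted_wrt_iff_nth_less
      proof (intro allI impI)
        fix a b assume ab: "a < b" "b < length p"
        have e: "KK x (p!a) = (blk C a, n - p!a)" "KK x (p!b) = (blk C b, n - p!b)"
          using xj ab lx n_def unfolding KK_def by auto
        have "blk C a \<le> blk C b" using ab blk_mono by simp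
        moreover have "blk C a = blk C b \<Longrightarrow> n - p!a < n - p!b"
          using D[of a b] ab perm_range[OF P, of a] n_def by auto
        ultimately show "KK x (p!a) < KK x (p!b)" unfolding e by (auto simp: le_less)
      qed
    qed
  qed
  have cy: "cay x"
  proof (cases "n = 0")
    case True then have "x = []" using lx by simp
    then show ?thesis unfolding cay_def by (intro exI[of _ 0]) simp
  next
    case False
    have "set x = {1..blk C (n-1)}"
    proof
      show "set x \<subseteq> {1..blk C (n-1)}"
      proof
        fix v assume "v \<in> set x"
        then obtain i where "i < n" "x!i = v" using lx by (auto simp: in_set_conv_nth)
        then obtain j where "j < n" "v = blk C j" using xi by force
        then show "v \<in> {1..blk C (n-1)}" using blk_ge1 blk_mono[of j "n-1" C] by auto
      qed
      show "{1..blk C (n-1)} \<subseteq> set x"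
      proof
        fix v assume "v \<in> {1..blk C (n-1)}"
        then obtain j where j: "j \<le> n-1" "blk C j = v" using blk_ivt by force
        then have "j < n" using False by simp
        then have "x!(p!j - 1) = v" "p!j - 1 < n" using xj j perm_range[OF P, of j] n_def by force+
        then show "v \<in> set x" using lx by (metis nth_mem)
      qed
    qed
    then show ?thesis unfolding cay_def by blast
  qed
  have Q: "Qc x" unfolding Qc_def
  proof (intro allI impI)
    fix i assume i: "0 < i \<and> i < length x"
    obtain j where j: "j < n" "p!j = Suc i" "x!i = blk C j" using xi i lx by auto
    obtain j' where j': "j' < n" "p!j' = i" using perm_surj[OF P, of i] i lx n_def by auto
    have xi1: "x!(i-1) = blk C j'" using xj[OF j'(1)] j' by simp
    have jne: "j' \<noteq> j" using j j' by auto
    have L: "blk C j' < blk C j \<longleftrightarrow> j' < j"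
    proof (cases "j' < j")
      case True
      have "blk C j' \<le> blk C j" using True blk_mono by simp
      moreover have "blk C j' \<noteq> blk C j" using D[of j' j] True j j' by auto
      ultimately show ?thesis using True by simp
    next
      case False
      then show ?thesis using blk_mono[of j j' C] jne by auto
    qed
    have mem: "x!i \<in> set (take i x) \<longleftrightarrow> (\<exists>m<i. x!m = x!i)"
      using i by (auto simp: in_set_conv_nth)
    have R: "(\<exists>m<i. x!m = x!i) \<longleftrightarrow> \<not> j' < j"
    proof
      assume "\<exists>m<i. x!m = x!i"
      then obtain m where m: "m < i" "x!m = x!i" by auto
      have "m < n" using m i lx by simp
      then obtain t where t: "t < n" "p!t = Suc m" "x!m = blk C t" using xi by blast
      have bt: "blk C t = blk C j" using t j m by simp
      have "t \<noteq> j" using t j m by auto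
      show "\<not> j' < j"
      proof
        assume jj: "j' < j"
        show False
        proof (cases "t < j")
          case True
          then have "p!j < p!t" using D[of t j] bt j by auto
          then show False using t j m by simp
        next
          case False
          then have "j < t" using \<open>t \<noteq> j\<close> by simp
          then have "\<not> C j" using blk_eq_noC[of j t C j] bt by auto
          moreover have "C j" using C_def \<open>j < t\<close> t jj j j' by auto
          ultimately show False by simp
        qed
      qed
    next
      assume "\<not> j' < j"
      then have jj: "j < j'" using jne by simp
      then have sj: "Suc j < n" using j' by simp
      have nC: "\<not> C j"
      proof
        assume "C j"
        then obtain k where k: "k < j" "p!k + 1 = p!j" using C_def j i by auto
        then have "p!k = p!j'" using j j' by simp
        then have "k = j'" using dist k j j' by auto
        then show False using k jj by simp
      qed
      then have "\<not> p!j < p!Suc j" using F1 sj by blast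
      moreover have "p!j \<noteq> p!Suc j" using dist sj j by auto
      ultimately have lt: "p!Suc j < p!j" by simp
      have r1: "1 \<le> p!Suc j" using perm_range[OF P] sj n_def by auto
      define m where "m = p!Suc j - 1"
      have "m < i" using lt r1 j m_def by auto
      moreover have "x!m = blk C (Suc j)" using xj[OF sj] m_def by simp
      moreover have "blk C (Suc j) = blk C j" using nC by simp
      ultimately show "\<exists>m<i. x!m = x!i" using j by auto
    qed
    show "(x!(i-1) < x!i) = (x!i \<notin> set (take i x))"
      using L R mem xi1 j by simp
  qed
  show ?thesis using cy Q g by blast
qed


lemma cls_perm_inv: "is_perm s \<Longrightarrow> y \<in> cls (perm_inv s) \<longleftrightarrow> cay y \<and> gamma y = s"
  unfolding cls_def using gamma_perm_inv by simp

theorem theorem5p3: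
  assumes "\<forall>\<sigma>\<in>\<Omega>. is_perm \<sigma>"
  shows "fishburn_av \<Omega> = gamma ` modasc_av (inv_class \<Omega>)"
proof
  show "fishburn_av \<Omega> \<subseteq> gamma ` modasc_av (inv_class \<Omega>)"
  proof
    fix p assume p: "p \<in> fishburn_av \<Omega>"
    then have pp: "is_perm p" "fishburn p" "\<forall>\<sigma>\<in>\<Omega>. \<not> contains p \<sigma>"
      unfolding fishburn_av_def by auto
    obtain x where x: "cay x" "Qc x" "gamma x = p" using construct[OF pp(1,2)] by blast
    have xm: "x \<in> modasc" using modasc_char x by blast
    have "\<forall>y\<in>inv_class \<Omega>. \<not> contains x y"
    proof
      fix y assume "y \<in> inv_class \<Omega>"
      then obtain s where s: "s \<in> \<Omega>" "y \<in> cls (perm_inv s)" unfolding inv_class_def by blast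
      have sp: "is_perm s" using assms s by blast
      then have "cay y" "gamma y = s" using cls_perm_inv s by auto
      show "\<not> contains x y"
      proof
        assume "contains x y"
        then have "contains (gamma x) s" using pattern[OF sp, of x] \<open>cay y\<close> \<open>gamma y = s\<close> by blast
        then show False using pp(3) s x(3) by blast
      qed
    qed
    then have "x \<in> modasc_av (inv_class \<Omega>)" using xm unfolding modasc_av_def by blast
    then show "p \<in> gamma ` modasc_av (inv_class \<Omega>)" using x(3) by blast
  qed
next
  show "gamma ` modasc_av (inv_class \<Omega>) \<subseteq> fishburn_av \<Omega>"
  proof
    fix p assume "p \<in> gamma ` modasc_av (inv_class \<Omega>)"
    then obtain x where x: "x \<in> modasc" "\<forall>y\<in>inv_class \<Omega>. \<not> contains x y" "p = gamma x"
      unfolding modasc_av_def by blast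
    have Q: "Qc x" using modasc_char x(1) by blast
    have "\<forall>\<sigma>\<in>\<Omega>. \<not> contains p \<sigma>"
    proof
      fix s assume s: "s \<in> \<Omega>"
      have sp: "is_perm s" using assms s by blast
      show "\<not> contains p s"
      proof
        assume "contains p s"
        then obtain y where y: "cay y" "gamma y = s" "contains x y" using pattern[OF sp, of x] x(3) by blast
        then have "y \<in> inv_class \<Omega>" using cls_perm_inv[OF sp] s unfolding inv_class_def by blast
        then show False using x(2) y(3) by blast
      qed
    qed
    then show "p \<in> fishburn_av \<Omega>" unfolding fishburn_av_def using gamma_perm fish[OF Q] x(3) by blast
  qed
qed

end
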